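(* Let $P$ be a disjunctive finitely recursive program and $P_1,P_2,\dots$ a module sequence for $P$. A ground formula $F$ in the language of $P$ is a skeptical consequence of $P$ if and only if there exists a finite $k\ge1$ such that $F$ is a skeptical consequence of $P_k$ and $\mathit{atom}(F)\subseteq\mathit{atom}(P_k)$.
   Context: A disjunctive program is a set of rules $A_1\vee\dots\vee A_m\leftarrow L_1,\dots,L_n$ ($m>0$, $n\ge0$), $A_j$ atoms, $L_i$ atoms or negated atoms $\mathtt{not}\,A$, possibly with function symbols; $head(r)=\{A_1,\dots,A_m\}$. $\mathsf{Ground}(P)$ is its ground instantiation; for a set $X$ of ground rules, $\mathit{atom}(X)$ is the set of ground atoms occurring in $X$. For a set $Q$ of ground rules and a set $M$ of ground atoms, $Q^M$ is obtained by deleting rules of $Q$ having some $\mathtt{not}\,B$ in the body with $B\in M$ and deleting negative literals from the remaining rules; $M$ is a stable model of $Q$ iff it is a minimal Herbrand model of $Q^M$ (stable models of $P$ are those of $\mathsf{Ground}(P)$). A ground formula is a closed propositional combination of ground atoms; $\mathit{atom}(F)$ is the set of ground atoms occurring in $F$. $F$ is a skeptical consequence of a program iff $F$ is (classically) true in every stable model of it (vacuously if there is none). The dependency graph has ground atoms as vertices and an edge $A\to B$ whenever some $r\in\mathsf{Ground}(P)$ has $A\in head(r)$ and $B$ occurring in $r$ (body or head); $A$ depends on $B$ if there is a directed path from $A$ to $B$ (every atom depends on itself). $P$ is finitely recursive iff each ground atom depends on finitely many ground atoms. With $GH$ the set of ground head atoms of $\mathsf{Ground}(P)$ and an enumeration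 $p_1,p_2,\dots$ of $GH$, the induced module sequence is $P_1=\{r\in\mathsf{Ground}(P)\mid p_1$ depends on some atom of $head(r)\}$, $P_{i+1}=P_i\cup\{r\in\mathsf{Ground}(P)\mid p_{i+1}$ depends on some atom of $head(r)\}$. *)

theory Defs
  imports Main
begin

text \<open>Ground disjunctive rules over a type 'a of ground atoms:
  Rule heads posbody negbody  stands for  A1 v ... v Am <- B1,...,Bk, not C1,...,not Cl.\<close>
datatype 'a rule = Rule (rhead: "'a list") (rpos: "'a list") (rneg: "'a list")

definition head :: "'a rule \<Rightarrow> 'a set" where
  "head r = set (rhead r)"

definition rule_atoms :: "'a rule \<Rightarrow> 'a set" where
  "rule_atoms r = set (rhead r) \<union> set (rpos r) \<union> set (rneg r)"

definition atom :: "'a rule set \<Rightarrow> 'a set" where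
  "atom X = (\<Union>r\<in>X. rule_atoms r)"

definition disjunctive_program :: "'a rule set \<Rightarrow> bool" where
  "disjunctive_program Q \<longleftrightarrow> (\<forall>r\<in>Q. rhead r \<noteq> [])"

definition reduct :: "'a rule set \<Rightarrow> 'a set \<Rightarrow> 'a rule set" where
  "reduct Q M = {Rule (rhead r) (rpos r) [] | r. r \<in> Q \<and> set (rneg r) \<inter> M = {}}"

definition is_model :: "'a rule set \<Rightarrow> 'a set \<Rightarrow> bool" where
  "is_model Q M \<longleftrightarrow> (\<forall>r\<in>Q. set (rpos r) \<subseteq> M \<and> set (rneg r) \<inter> M = {} \<longrightarrow> head r \<inter> M \<noteq> {})"

definition minimal_model :: "'a rule set \<Rightarrow> 'a set \<Rightarrow> bool" where
  "minimal_model Q M \<longleftrightarrow> is_model Q M \<and> (\<forall>N. N \<subset> M \<longrightarrow> \<not> is_model Q N)"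

definition stable_model :: "'a rule set \<Rightarrow> 'a set \<Rightarrow> bool" where
  "stable_model Q M \<longleftrightarrow> minimal_model (reduct Q M) M"

datatype 'a form = FAtom 'a | FTrue | FFalse | FNot "'a form"
  | FAnd "'a form" "'a form" | FOr "'a form" "'a form" | FImp "'a form" "'a form"

fun holds :: "'a set \<Rightarrow> 'a form \<Rightarrow> bool" where
  "holds M (FAtom A) = (A \<in> M)"
| "holds M FTrue = True"
| "holds M FFalse = False"
| "holds M (FNot F) = (\<not> holds M F)"
| "holds M (FAnd F G) = (holds M F \<and> holds M G)"
| "holds M (FOr F G) = (holds M F \<or> holds M G)"
| "holds M (FImp F G) = (holds M F \<longrightarrow> holds M G)"

fun form_atoms :: "'a form \<Rightarrow> 'a set" where
  "form_atoms (FAtom A) = {A}"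
| "form_atoms FTrue = {}"
| "form_atoms FFalse = {}"
| "form_atoms (FNot F) = form_atoms F"
| "form_atoms (FAnd F G) = form_atoms F \<union> form_atoms G"
| "form_atoms (FOr F G) = form_atoms F \<union> form_atoms G"
| "form_atoms (FImp F G) = form_atoms F \<union> form_atoms G"

definition skeptical_consequence :: "'a rule set \<Rightarrow> 'a form \<Rightarrow> bool" where
  "skeptical_consequence Q F \<longleftrightarrow> (\<forall>M. stable_model Q M \<longrightarrow> holds M F)"

definition dep_edge :: "'a rule set \<Rightarrow> 'a \<Rightarrow> 'a \<Rightarrow> bool" where
  "dep_edge Q A B \<longleftrightarrow> (\<exists>r\<in>Q. A \<in> head r \<and> B \<in> rule_atoms r)"

definition depends :: "'a rule set \<Rightarrow> 'a \<Rightarrow> 'a \<Rightarrow> bool" where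
  "depends Q A B \<longleftrightarrow> (dep_edge Q)\<^sup>*\<^sup>* A B"

definition finitely_recursive :: "'a rule set \<Rightarrow> bool" where
  "finitely_recursive Q \<longleftrightarrow> (\<forall>A. finite {B. depends Q A B})"

definition GH :: "'a rule set \<Rightarrow> 'a set" where
  "GH Q = (\<Union>r\<in>Q. head r)"

definition enumeration :: "'a rule set \<Rightarrow> (nat \<Rightarrow> 'a) \<Rightarrow> bool" where
  "enumeration Q p \<longleftrightarrow> p ` {1..} = GH Q"

definition module_seq :: "'a rule set \<Rightarrow> (nat \<Rightarrow> 'a) \<Rightarrow> nat \<Rightarrow> 'a rule set" where
  "module_seq Q p k = {r \<in> Q. \<exists>i\<in>{1..k}. \<exists>A\<in>head r. depends Q (p i) A}"

end

theory Submission
  imports Defs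
begin

lemma model_reduct:
  "is_model (reduct Q M) N \<longleftrightarrow>
   (\<forall>r\<in>Q. set (rneg r) \<inter> M = {} \<longrightarrow> set (rpos r) \<subseteq> N \<longrightarrow> head r \<inter> N \<noteq> {})"
proof
  assume h: "is_model (reduct Q M) N"
  show "\<forall>r\<in>Q. set (rneg r) \<inter> M = {} \<longrightarrow> set (rpos r) \<subseteq> N \<longrightarrow> head r \<inter> N \<noteq> {}"
  proof (intro ballI impI)
    fix r assume r: "r \<in> Q" "set (rneg r) \<inter> M = {}" "set (rpos r) \<subseteq> N"
    have "Rule (rhead r) (rpos r) [] \<in> reduct Q M" unfolding reduct_def using r by blast
    thus "head r \<inter> N \<noteq> {}" using h r unfolding is_model_def head_def by fastforce
  qed
next
  assume h: "\<forall>r\<in>Q. set (rneg r) \<inter> M = {} \<longrightarrow> set (rpos r) \<subseteq> N \<longrightarrow> head r \<inter> N \<noteq> {}"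
  show "is_model (reduct Q M) N" unfolding is_model_def reduct_def
    using h unfolding head_def by auto
qed

lemma model_reductD: "is_model (reduct Q M) N \<Longrightarrow> r \<in> Q \<Longrightarrow> set (rneg r) \<inter> M = {}
   \<Longrightarrow> set (rpos r) \<subseteq> N \<Longrightarrow> head r \<inter> N \<noteq> {}"
  unfolding model_reduct by blast

lemma stableD: "stable_model Q M \<Longrightarrow> r \<in> Q \<Longrightarrow> set (rneg r) \<inter> M = {}
   \<Longrightarrow> set (rpos r) \<subseteq> M \<Longrightarrow> head r \<inter> M \<noteq> {}"
proof -
  assume a: "stable_model Q M" "r \<in> Q" "set (rneg r) \<inter> M = {}" "set (rpos r) \<subseteq> M"
  have "is_model (reduct Q M) M" using a(1) unfolding stable_model_def minimal_model_def by simp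
  from model_reductD[OF this a(2-4)] show ?thesis .
qed

lemma stable_min: "stable_model Q M \<Longrightarrow> N \<subset> M \<Longrightarrow> is_model (reduct Q M) N \<Longrightarrow> False"
  unfolding stable_model_def minimal_model_def by blast

lemma ra_sub: "rule_atoms r \<subseteq> U \<Longrightarrow> head r \<subseteq> U \<and> set (rpos r) \<subseteq> U \<and> set (rneg r) \<subseteq> U"
  unfolding head_def rule_atoms_def by blast

lemma rule_atoms_sub: "r \<in> Q \<Longrightarrow> rule_atoms r \<subseteq> atom Q"
  unfolding atom_def by auto

lemma ra_parts: "head r \<subseteq> rule_atoms r" "set (rpos r) \<subseteq> rule_atoms r" "set (rneg r) \<subseteq> rule_atoms r"
  unfolding head_def rule_atoms_def by auto

lemma L_restrict:
  assumes QR: "Q \<subseteq> R" and AU: "atom Q \<subseteq> U"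
    and cl: "\<And>r. r \<in> R \<Longrightarrow> head r \<inter> U \<noteq> {} \<Longrightarrow> r \<in> Q"
    and st: "stable_model R M"
  shows "stable_model Q (M \<inter> U)"
proof -
  have mR: "\<forall>r\<in>R. set (rneg r) \<inter> M = {} \<longrightarrow> set (rpos r) \<subseteq> M \<longrightarrow> head r \<inter> M \<noteq> {}"
    using st unfolding stable_model_def minimal_model_def model_reduct by blast
  have minR: "\<And>N. N \<subset> M \<Longrightarrow> \<not> is_model (reduct R M) N"
    using st unfolding stable_model_def minimal_model_def by blast
  have sub: "\<And>r. r \<in> Q \<Longrightarrow> rule_atoms r \<subseteq> U" using AU rule_atoms_sub by blast
  have m1: "is_model (reduct Q (M \<inter> U)) (M \<inter> U)"
    unfolding model_reduct
  proof (intro ballI impI)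
    fix r assume r: "r \<in> Q" and n: "set (rneg r) \<inter> (M \<inter> U) = {}" and b: "set (rpos r) \<subseteq> M \<inter> U"
    have ru: "rule_atoms r \<subseteq> U" using sub r .
    have "set (rneg r) \<inter> M = {}" using n ra_sub[OF ru] by blast
    hence "head r \<inter> M \<noteq> {}" using mR r QR b by blast
    thus "head r \<inter> (M \<inter> U) \<noteq> {}" using ra_sub[OF ru] by blast
  qed
  have m2: "\<not> is_model (reduct Q (M \<inter> U)) N" if N: "N \<subset> M \<inter> U" for N
  proof
    assume mN: "is_model (reduct Q (M \<inter> U)) N"
    hence mN': "\<forall>r\<in>Q. set (rneg r) \<inter> (M \<inter> U) = {} \<longrightarrow> set (rpos r) \<subseteq> N \<longrightarrow> head r \<inter> N \<noteq> {}"
      unfolding model_reduct .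
    let ?N = "N \<union> (M - U)"
    have "?N \<subset> M" using N by blast
    moreover have "is_model (reduct R M) ?N"
      unfolding model_reduct
    proof (intro ballI impI)
      fix r assume r: "r \<in> R" and n: "set (rneg r) \<inter> M = {}" and b: "set (rpos r) \<subseteq> ?N"
      show "head r \<inter> ?N \<noteq> {}"
      proof (cases "r \<in> Q")
        case True
        have ru: "rule_atoms r \<subseteq> U" using sub True .
        have "set (rpos r) \<subseteq> N" using b ra_sub[OF ru] by blast
        moreover have "set (rneg r) \<inter> (M \<inter> U) = {}" using n by blast
        ultimately show ?thesis using mN' True by blast
      next
        case False
        hence hU: "head r \<inter> U = {}" using cl r by blast
        have "set (rpos r) \<subseteq> M" using b N by blast
        hence "head r \<inter> M \<noteq> {}" using mR r n by blast
        thus ?thesis using hU by blast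
      qed
    qed
    ultimately show False using minR by blast
  qed
  show ?thesis unfolding stable_model_def minimal_model_def using m1 m2 by blast
qed

lemma stable_sub: assumes "stable_model Q M" shows "M \<subseteq> atom Q"
proof (rule ccontr)
  assume nsub: "\<not> M \<subseteq> atom Q"
  have mQ: "\<forall>r\<in>Q. set (rneg r) \<inter> M = {} \<longrightarrow> set (rpos r) \<subseteq> M \<longrightarrow> head r \<inter> M \<noteq> {}"
    using assms unfolding stable_model_def minimal_model_def model_reduct by blast
  have "is_model (reduct Q M) (M \<inter> atom Q)"
    unfolding model_reduct
  proof (intro ballI impI)
    fix r assume r: "r \<in> Q" "set (rneg r) \<inter> M = {}" "set (rpos r) \<subseteq> M \<inter> atom Q"
    hence "head r \<inter> M \<noteq> {}" using mQ by blast
    moreover have "head r \<subseteq> atom Q" using ra_sub[OF rule_atoms_sub[OF r(1)]] by blast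
    ultimately show "head r \<inter> (M \<inter> atom Q) \<noteq> {}" by blast
  qed
  moreover have "M \<inter> atom Q \<subset> M" using nsub by blast
  ultimately show False using assms unfolding stable_model_def minimal_model_def by blast
qed

lemma holds_restrict: "form_atoms F \<subseteq> U \<Longrightarrow> holds (M \<inter> U) F = holds M F"
  by (induction F) auto

lemma finite_form_atoms: "finite (form_atoms F)"
  by (induction F) auto

lemma pigeon:
  fixes R :: "nat \<Rightarrow> 'b \<Rightarrow> bool"
  assumes fin: "finite C" and ex: "\<And>m. m \<ge> k \<Longrightarrow> \<exists>x\<in>C. R m x"
    and mono: "\<And>m m' x. R m x \<Longrightarrow> k \<le> m' \<Longrightarrow> m' \<le> m \<Longrightarrow> R m' x"
  shows "\<exists>x\<in>C. \<forall>m\<ge>k. R m x"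
proof (rule ccontr)
  assume "\<not> ?thesis"
  hence "\<forall>x\<in>C. \<exists>m\<ge>k. \<not> R m x" by blast
  then obtain f where f: "\<And>x. x \<in> C \<Longrightarrow> f x \<ge> k \<and> \<not> R (f x) x" by metis
  define m where "m = Max (insert k (f ` C))"
  have fm: "\<And>x. x \<in> C \<Longrightarrow> f x \<le> m" unfolding m_def using fin by auto
  have km: "k \<le> m" unfolding m_def using fin by auto
  obtain x where x: "x \<in> C" "R m x" using ex[OF km] by blast
  have "R (f x) x" using mono[OF x(2)] f[OF x(1)] fm[OF x(1)] by blast
  thus False using f[OF x(1)] by blast
qed

definition DD :: "'a rule set \<Rightarrow> (nat \<Rightarrow> 'a) \<Rightarrow> nat \<Rightarrow> 'a set" where
  "DD P p k = {B. \<exists>i\<in>{1..k}. depends P (p i) B}"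

lemma DD_finite: assumes "finitely_recursive P" shows "finite (DD P p k)"
proof -
  have "DD P p k = (\<Union>i\<in>{1..k}. {B. depends P (p i) B})" unfolding DD_def by auto
  thus ?thesis using assms unfolding finitely_recursive_def by auto
qed

lemma atom_mono: "Q \<subseteq> R \<Longrightarrow> atom Q \<subseteq> atom R"
  unfolding atom_def by blast

lemma DD_mono: "k \<le> m \<Longrightarrow> DD P p k \<subseteq> DD P p m"
  unfolding DD_def by auto

lemma Pk_mono: "k \<le> m \<Longrightarrow> module_seq P p k \<subseteq> module_seq P p m"
  unfolding module_seq_def by fastforce

lemma Pk_sub: "module_seq P p k \<subseteq> P"
  unfolding module_seq_def by auto

lemma atom_Pk_DD: "atom (module_seq P p k) \<subseteq> DD P p k"
proof
  fix B assume "B \<in> atom (module_seq P p k)"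
  then obtain r where r: "r \<in> module_seq P p k" "B \<in> rule_atoms r" unfolding atom_def by auto
  then obtain i A where iA: "i \<in> {1..k}" "A \<in> head r" "depends P (p i) A" "r \<in> P"
    unfolding module_seq_def by auto
  have "dep_edge P A B" unfolding dep_edge_def using iA r by blast
  hence "depends P (p i) B" using iA(3) unfolding depends_def
    by (meson rtranclp.rtrancl_into_rtrancl)
  thus "B \<in> DD P p k" unfolding DD_def using iA by blast
qed

lemma Pk_closed: "r \<in> P \<Longrightarrow> head r \<inter> DD P p k \<noteq> {} \<Longrightarrow> r \<in> module_seq P p k"
  unfolding DD_def module_seq_def by blast

lemma rule_in_Pk:
  assumes "disjunctive_program P" "enumeration P p" "r \<in> P"
  shows "\<exists>j\<ge>1. r \<in> module_seq P p j"
proof -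
  obtain A where A: "A \<in> head r" using assms(1,3) unfolding disjunctive_program_def head_def
    by (metis list.set_intros(1) neq_Nil_conv)
  hence "A \<in> GH P" unfolding GH_def using assms(3) by blast
  then obtain j where j: "j \<ge> 1" "p j = A" using assms(2) unfolding enumeration_def
    by (metis atLeast_iff imageE)
  have "depends P (p j) A" unfolding depends_def using j by simp
  hence "r \<in> module_seq P p j" unfolding module_seq_def using assms(3) A j by force
  thus ?thesis using j by blast
qed

lemma atoms_in_Pk:
  assumes "disjunctive_program P" "enumeration P p" "finite X" "X \<subseteq> atom P"
  shows "\<exists>k\<ge>1. X \<subseteq> atom (module_seq P p k)"
proof -
  have "\<forall>x\<in>X. \<exists>j\<ge>1. x \<in> atom (module_seq P p j)"
  proof
    fix x assume "x \<in> X"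
    then obtain r where r: "r \<in> P" "x \<in> rule_atoms r" using assms(4) unfolding atom_def by auto
    obtain j where "j \<ge> 1" "r \<in> module_seq P p j" using rule_in_Pk[OF assms(1,2) r(1)] by blast
    thus "\<exists>j\<ge>1. x \<in> atom (module_seq P p j)" using r(2) unfolding atom_def by blast
  qed
  then obtain f where f: "\<And>x. x \<in> X \<Longrightarrow> f x \<ge> 1 \<and> x \<in> atom (module_seq P p (f x))" by metis
  define k where "k = Max (insert 1 (f ` X))"
  have "k \<ge> 1" unfolding k_def using assms(3) by auto
  moreover have "X \<subseteq> atom (module_seq P p k)"
  proof
    fix x assume x: "x \<in> X"
    have "f x \<le> k" unfolding k_def using assms(3) x by auto
    hence "module_seq P p (f x) \<subseteq> module_seq P p k" by (rule Pk_mono)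
    thus "x \<in> atom (module_seq P p k)" using f[OF x] unfolding atom_def by blast
  qed
  ultimately show ?thesis by blast
qed

lemma level_restrict:
  "k \<le> m \<Longrightarrow> stable_model (module_seq P p m) Y \<Longrightarrow> stable_model (module_seq P p k) (Y \<inter> DD P p k)"
  apply (rule L_restrict[where R = "module_seq P p m"])
     apply (erule Pk_mono)
    apply (rule atom_Pk_DD)
   apply (rule Pk_closed)
    apply (erule subsetD[OF Pk_sub])
   apply assumption
  apply assumption
  done

theorem theorem5p2:
  fixes P :: "'a rule set" and p :: "nat \<Rightarrow> 'a" and F :: "'a form"
  assumes "disjunctive_program P"
    and "finitely_recursive P"
    and "enumeration P p"
    and "form_atoms F \<subseteq> atom P"
  shows "skeptical_consequence P F \<longleftrightarrow>
    (\<exists>k\<ge>1. skeptical_consequence (module_seq P p k) F \<and> form_atoms F \<subseteq> atom (module_seq P p k))"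
proof
  assume sk: "skeptical_consequence P F"
  obtain k0 where k0: "k0 \<ge> 1" "form_atoms F \<subseteq> atom (module_seq P p k0)"
    using atoms_in_Pk[OF assms(1,3) finite_form_atoms assms(4)] by blast
  have FD: "form_atoms F \<subseteq> DD P p k0" using k0(2) atom_Pk_DD[of P p k0] by (rule subset_trans)
  show "\<exists>k\<ge>1. skeptical_consequence (module_seq P p k) F \<and> form_atoms F \<subseteq> atom (module_seq P p k)"
  proof (rule ccontr)
    assume nex: "\<not> ?thesis"
    hence nsk: "\<And>k. k \<ge> k0 \<Longrightarrow> \<not> skeptical_consequence (module_seq P p k) F"
    proof -
      fix k assume kk: "k \<ge> k0"
      have "atom (module_seq P p k0) \<subseteq> atom (module_seq P p k)"
        using atom_mono[OF Pk_mono[OF kk]] .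
      hence fa: "form_atoms F \<subseteq> atom (module_seq P p k)" using k0(2) by (rule subset_trans[rotated])
      have k1: "k \<ge> 1" using k0(1) kk by simp
      show "\<not> skeptical_consequence (module_seq P p k) F"
      proof
        assume "skeptical_consequence (module_seq P p k) F"
        hence "\<exists>k\<ge>1. skeptical_consequence (module_seq P p k) F \<and> form_atoms F \<subseteq> atom (module_seq P p k)"
          using k1 fa by blast
        thus False using nex by (rule notE[rotated])
      qed
    qed
    define S where "S k = {M. stable_model (module_seq P p k) M \<and> \<not> holds M F}" for k
    have Sne: "\<And>k. k \<ge> k0 \<Longrightarrow> \<exists>M. M \<in> S k"
      using nsk unfolding S_def skeptical_consequence_def by blast
    have Ssub: "M \<subseteq> DD P p k" if "M \<in> S k" for k M
    proof -
      have "stable_model (module_seq P p k) M" using that unfolding S_def by simp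
      hence "M \<subseteq> atom (module_seq P p k)" by (rule stable_sub)
      thus ?thesis using atom_Pk_DD[of P p k] by (rule subset_trans)
    qed
    have Sfin: "finite (S k)" for k
    proof -
      have "S k \<subseteq> Pow (DD P p k)" using Ssub by blast
      moreover have "finite (Pow (DD P p k))" using DD_finite[OF assms(2)] by simp
      ultimately show ?thesis by (rule finite_subset)
    qed
    have Sres: "\<And>k m Y. k0 \<le> k \<Longrightarrow> k \<le> m \<Longrightarrow> Y \<in> S m \<Longrightarrow> Y \<inter> DD P p k \<in> S k"
    proof -
      fix k m Y assume a: "k0 \<le> k" "k \<le> m" "Y \<in> S m"
      have fD: "form_atoms F \<subseteq> DD P p k" using FD DD_mono[OF a(1)] by (rule subset_trans)
      have sY: "stable_model (module_seq P p m) Y" and hY: "\<not> holds Y F" using a(3) unfolding S_def by auto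
      have "stable_model (module_seq P p k) (Y \<inter> DD P p k)" using level_restrict[OF a(2) sY] .
      moreover have "\<not> holds (Y \<inter> DD P p k) F" using hY holds_restrict[OF fD, of Y] by simp
      ultimately show "Y \<inter> DD P p k \<in> S k" unfolding S_def by simp
    qed
    define good where "good k X \<longleftrightarrow> X \<in> S k \<and> (\<forall>m\<ge>k. \<exists>Y\<in>S m. Y \<inter> DD P p k = X)" for k X
    have DDint: "Y \<inter> DD P p k' \<inter> DD P p k = Y \<inter> DD P p k" if kk: "k \<le> k'" for Y k k'
      using DD_mono[OF kk, of P p] by blast
    have base: "\<exists>X. good k0 X"
    proof -
      have "\<exists>x\<in>S k0. \<forall>m\<ge>k0. \<exists>Y\<in>S m. Y \<inter> DD P p k0 = x"
      proof (rule pigeon[OF Sfin])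
        fix m assume "m \<ge> k0"
        then obtain Y where "Y \<in> S m" using Sne by blast
        thus "\<exists>x\<in>S k0. \<exists>Y\<in>S m. Y \<inter> DD P p k0 = x" using Sres[OF order_refl \<open>m \<ge> k0\<close>] by blast
      next
        fix m m' x assume "\<exists>Y\<in>S m. Y \<inter> DD P p k0 = x" "k0 \<le> m'" "m' \<le> m"
        then obtain Y where Y: "Y \<in> S m" "Y \<inter> DD P p k0 = x" by blast
        have "Y \<inter> DD P p m' \<in> S m'" using Sres[OF \<open>k0 \<le> m'\<close> \<open>m' \<le> m\<close> Y(1)] .
        moreover have "Y \<inter> DD P p m' \<inter> DD P p k0 = x" using DDint[OF \<open>k0 \<le> m'\<close>] Y by blast
        ultimately show "\<exists>Y\<in>S m'. Y \<inter> DD P p k0 = x" by blast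
      qed
      thus ?thesis unfolding good_def by blast
    qed
    have step: "\<exists>X'. good (Suc k) X' \<and> X' \<inter> DD P p k = X" if g: "good k X" "k0 \<le> k" for k X
    proof -
      define C where "C = {X' \<in> S (Suc k). X' \<inter> DD P p k = X}"
      have "finite C" unfolding C_def using Sfin by auto
      have "\<exists>x\<in>C. \<forall>m\<ge>Suc k. \<exists>Y\<in>S m. Y \<inter> DD P p (Suc k) = x"
      proof (rule pigeon[OF \<open>finite C\<close>])
        fix m assume m: "m \<ge> Suc k"
        have mk: "k \<le> m" using m by simp
        obtain Y where Y: "Y \<in> S m" "Y \<inter> DD P p k = X" using g(1) mk unfolding good_def by blast
        have "Y \<inter> DD P p (Suc k) \<in> S (Suc k)" using Sres[OF _ m Y(1)] g(2) by simp
        moreover have "Y \<inter> DD P p (Suc k) \<inter> DD P p k = X" using DDint[of k "Suc k"] Y by auto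
        ultimately show "\<exists>x\<in>C. \<exists>Y\<in>S m. Y \<inter> DD P p (Suc k) = x" unfolding C_def using Y by blast
      next
        fix m m' x assume "\<exists>Y\<in>S m. Y \<inter> DD P p (Suc k) = x" "Suc k \<le> m'" "m' \<le> m"
        then obtain Y where Y: "Y \<in> S m" "Y \<inter> DD P p (Suc k) = x" by blast
        have "Y \<inter> DD P p m' \<in> S m'" using Sres[OF _ \<open>m' \<le> m\<close> Y(1)] \<open>Suc k \<le> m'\<close> g(2) by simp
        moreover have "Y \<inter> DD P p m' \<inter> DD P p (Suc k) = x" using DDint[OF \<open>Suc k \<le> m'\<close>] Y by blast
        ultimately show "\<exists>Y\<in>S m'. Y \<inter> DD P p (Suc k) = x" by blast
      qed
      thus ?thesis unfolding good_def C_def by blast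
    qed
    define ch where "ch = rec_nat (SOME X. good k0 X)
       (\<lambda>n X. SOME X'. good (Suc (k0 + n)) X' \<and> X' \<inter> DD P p (k0 + n) = X)"
    have ch0: "ch 0 = (SOME X. good k0 X)" unfolding ch_def by simp
    have chS: "ch (Suc n) = (SOME X'. good (Suc (k0 + n)) X' \<and> X' \<inter> DD P p (k0 + n) = ch n)" for n
      unfolding ch_def by simp
    have g0: "good k0 (ch 0)" unfolding ch0 using someI_ex[OF base] .
    have gS: "good (k0 + Suc n) (ch (Suc n)) \<and> ch (Suc n) \<inter> DD P p (k0 + n) = ch n"
      if gn: "good (k0 + n) (ch n)" for n
    proof -
      have "\<exists>X'. good (Suc (k0 + n)) X' \<and> X' \<inter> DD P p (k0 + n) = ch n"
        using step[OF gn] by simp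
      from someI_ex[OF this] show ?thesis unfolding chS[of n, symmetric] by simp
    qed
    have chg: "good (k0 + n) (ch n) \<and> ch (Suc n) \<inter> DD P p (k0 + n) = ch n" for n
    proof -
      have "good (k0 + n) (ch n)"
      proof (induction n)
        case 0 thus ?case using g0 by simp
      next
        case (Suc n) thus ?case using gS by blast
      qed
      thus ?thesis using gS by blast
    qed
    have chsub: "ch n \<subseteq> DD P p (k0 + n)" for n using chg[of n] Ssub unfolding good_def by blast
    have chcoh: "j \<le> n \<Longrightarrow> ch n \<inter> DD P p (k0 + j) = ch j" for j n
    proof (induction n)
      case 0 thus ?case using chsub[of 0] by auto
    next
      case (Suc n)
      show ?case
      proof (cases "j = Suc n")
        case True thus ?thesis using chsub[of "Suc n"] by auto
      next
        case False
        hence "j \<le> n" using Suc by simp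
        have "ch (Suc n) \<inter> DD P p (k0 + j) = ch (Suc n) \<inter> DD P p (k0 + n) \<inter> DD P p (k0 + j)"
          using DD_mono[of "k0+j" "k0+n" P p] \<open>j \<le> n\<close> by auto
        also have "\<dots> = ch j" using chg[of n] Suc.IH[OF \<open>j \<le> n\<close>] by simp
        finally show ?thesis .
      qed
    qed
    define M where "M = (\<Union>n. ch n)"
    have MD: "M \<inter> DD P p (k0 + n) = ch n" for n
    proof
      show "M \<inter> DD P p (k0 + n) \<subseteq> ch n"
      proof
        fix x assume x: "x \<in> M \<inter> DD P p (k0 + n)"
        then obtain j where j: "x \<in> ch j" unfolding M_def by auto
        show "x \<in> ch n"
        proof (cases "j \<le> n")
          case True
          have "x \<in> ch n \<inter> DD P p (k0 + j)"
            using chcoh[OF True] j by blast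
          thus ?thesis by blast
        next
          case False
          hence "n \<le> j" by simp
          hence "ch j \<inter> DD P p (k0 + n) = ch n" by (rule chcoh)
          thus ?thesis using j x by blast
        qed
      qed
      show "ch n \<subseteq> M \<inter> DD P p (k0 + n)" using chsub[of n] unfolding M_def by blast
    qed
    have stn: "stable_model (module_seq P p (k0 + n)) (ch n)" for n
      using chg[of n] unfolding good_def S_def by blast
    have inlev: "\<exists>n. r \<in> module_seq P p (k0 + n)" if rP: "r \<in> P" for r
    proof -
      obtain j where "r \<in> module_seq P p j" using rule_in_Pk[OF assms(1,3) rP] by blast
      thus ?thesis using Pk_mono[of j "k0 + j" P p] by auto
    qed
    have ratD: "rule_atoms r \<subseteq> DD P p (k0 + n)" if "r \<in> module_seq P p (k0 + n)" for r n
      using rule_atoms_sub[OF that] atom_Pk_DD[of P p "k0 + n"] by (rule subset_trans)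
    have mod: "is_model (reduct P M) M"
      unfolding model_reduct
    proof (intro ballI impI)
      fix r assume r: "r \<in> P" "set (rneg r) \<inter> M = {}" "set (rpos r) \<subseteq> M"
      obtain n where n: "r \<in> module_seq P p (k0 + n)" using inlev r(1) by blast
      have ra: "rule_atoms r \<subseteq> DD P p (k0 + n)" using ratD[OF n] .
      have pD: "set (rpos r) \<subseteq> DD P p (k0 + n)" using ra_parts(2) ra by (rule subset_trans)
      have "set (rneg r) \<inter> ch n = {}" using r(2) MD[of n] by blast
      moreover have "set (rpos r) \<subseteq> ch n" using r(3) pD MD[of n] by blast
      ultimately have "head r \<inter> ch n \<noteq> {}"
        using stableD[OF stn[of n] n] by blast
      thus "head r \<inter> M \<noteq> {}" unfolding M_def by blast
    qed
    have mini: "\<not> is_model (reduct P M) N" if N: "N \<subset> M" for N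
    proof
      assume mN: "is_model (reduct P M) N"
      obtain x where x: "x \<in> M" "x \<notin> N" using N by blast
      then obtain n where xn: "x \<in> ch n" unfolding M_def by blast
      let ?D = "DD P p (k0 + n)"
      have "N \<inter> ?D \<subset> ch n" using N MD[of n] xn x by blast
      moreover have "is_model (reduct (module_seq P p (k0 + n)) (ch n)) (N \<inter> ?D)"
        unfolding model_reduct
      proof (intro ballI impI)
        fix r assume r: "r \<in> module_seq P p (k0 + n)" "set (rneg r) \<inter> ch n = {}" "set (rpos r) \<subseteq> N \<inter> ?D"
        have ra: "rule_atoms r \<subseteq> ?D" using ratD[OF r(1)] .
        have nD: "set (rneg r) \<subseteq> ?D" using ra_parts(3) ra by (rule subset_trans)
        have hD: "head r \<subseteq> ?D" using ra_parts(1) ra by (rule subset_trans)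
        have rP: "r \<in> P" using r(1) Pk_sub by blast
        have "set (rneg r) \<inter> M = {}" using r(2) nD MD[of n] by blast
        moreover have "set (rpos r) \<subseteq> N" using r(3) by blast
        ultimately have "head r \<inter> N \<noteq> {}" using model_reductD[OF mN rP] by blast
        thus "head r \<inter> (N \<inter> ?D) \<noteq> {}" using hD by blast
      qed
      ultimately show False using stable_min[OF stn[of n]] by blast
    qed
    have "stable_model P M" unfolding stable_model_def minimal_model_def using mod mini by blast
    hence "holds M F" using sk unfolding skeptical_consequence_def by blast
    moreover have "\<not> holds (ch 0) F" using chg[of 0] unfolding good_def S_def by simp
    ultimately show False using holds_restrict[OF FD, of M] MD[of 0] by simp
  qed
next
  assume "\<exists>k\<ge>1. skeptical_consequence (module_seq P p k) F \<and> form_atoms F \<subseteq> atom (module_seq P p k)"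
  then obtain k where k: "skeptical_consequence (module_seq P p k) F" "form_atoms F \<subseteq> atom (module_seq P p k)"
    by blast
  show "skeptical_consequence P F" unfolding skeptical_consequence_def
  proof (intro allI impI)
    fix M assume sM: "stable_model P M"
    have "stable_model (module_seq P p k) (M \<inter> DD P p k)"
      apply (rule L_restrict[where R = P])
         apply (rule Pk_sub)
        apply (rule atom_Pk_DD)
       apply (erule (1) Pk_closed)
      apply (rule sM)
      done
    hence "holds (M \<inter> DD P p k) F" using k(1) unfolding skeptical_consequence_def by blast
    moreover have "form_atoms F \<subseteq> DD P p k" using k(2) atom_Pk_DD[of P p k] by (rule subset_trans)
    ultimately show "holds M F" using holds_restrict by blast
  qed
qed

end
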